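(* Let $R,S\in\mathfrak{D}$ and $\mathfrak{D}'\subseteq\mathfrak{D}$, and let $$\mathfrak{G}_{\mathfrak{D}'}(R)=\{\mathcal{G}(\xi):\xi\in\mathcal{H}(G,R),\ G\in\mathfrak{D}'\}.$$ If $\#\mathcal{S}(G,R)\le\#\mathcal{S}(G,S)$ for all $G\in\mathfrak{G}_{\mathfrak{D}'}(R)$, then $R\sqsubseteq_\Gamma S$ with respect to $\mathfrak{D}'$.
   Context: **Digraphs and homomorphisms.** - A digraph $G$ is a pair $(V(G),A(G))$, where $V(G)$ is a finite non-empty set and $A(G)\subseteq V(G)\times V(G)$. Arcs are written $vw$. - An arc $vw$ with $v\ne w$ is proper. - A homomorphism $\xi:G\to H$ is a map $V(G)\to V(H)$ with $\xi(v)\xi(w)\in A(H)$ for all $vw\in A(G)$. $\mathcal{H}(G,H)$ is the set of homomorphisms. - A homomorphism is strict if it maps every proper arc to a proper arc. $\mathcal{S}(G,H)$ is the set of strict homomorphisms. - $\mathfrak{D}$ is the class of all digraphs. **Connectivity.** - Two vertices $u,w$ are adjacent if $uw\in A(G)$ or $wu\in A(G)$. - For $X\subseteq V(G)$ and $v,w\in X$, the vertices $v$ and $w$ are connected in $X$ if $v=w$, or if there are $z_0=v,\dots,z_I=w$ in $X$ with consecutive terms adjacent. - $\gamma_X(v)$ is the set of $w\in X$ connected to $v$ in $X$. - $\Gamma_\xi(v):=\gamma_{\xi^{-1}(\xi(v))}(v)$. **The quotient digraph.** For $\xi\in\mathcal{H}(G,H)$, $\mathcal{G}(\xi)$ is the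 digraph with: - vertex set $\{\Gamma_\xi(v):v\in V(G)\}$; - arcs $\mathfrak{a}\mathfrak{b}$ whenever there are $a\in\mathfrak{a}$, $b\in\mathfrak{b}$ with $ab\in A(G)$. **Schemes.** - For a class $\mathfrak{D}'$, let $\mathfrak{D}'_r$ be a fixed system of representatives up to isomorphism. - A Hom-scheme from $R$ to $S$ with respect to $\mathfrak{D}'$ is a family of maps $\rho_G:\mathcal{H}(G,R)\to\mathcal{H}(G,S)$, $G\in\mathfrak{D}'_r$. - It is strong if all $\rho_G$ are injective. - It is a $\Gamma$-scheme if $\Gamma_{\rho_G(\xi)}(v)=\Gamma_\xi(v)$ for all $G$, $\xi$ and $v$. - $R\sqsubseteq_\Gamma S$ with respect to $\mathfrak{D}'$ means that a strong $\Gamma$-scheme exists. *)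

theory Defs
  imports Main "HOL-Library.FuncSet"
begin

type_synonym 'v digraph = "'v set \<times> ('v \<times> 'v) set"

definition verts :: "'v digraph \<Rightarrow> 'v set" where "verts G = fst G"
definition arcs :: "'v digraph \<Rightarrow> ('v \<times> 'v) set" where "arcs G = snd G"

definition digraph :: "'v digraph \<Rightarrow> bool" where
  "digraph G \<longleftrightarrow> finite (verts G) \<and> verts G \<noteq> {} \<and> arcs G \<subseteq> verts G \<times> verts G"

definition homs :: "'v digraph \<Rightarrow> 'w digraph \<Rightarrow> ('v \<Rightarrow> 'w) set" where
  "homs G H = {\<xi> \<in> verts G \<rightarrow>\<^sub>E verts H. \<forall>(v,w) \<in> arcs G. (\<xi> v, \<xi> w) \<in> arcs H}"

definition strict_homs :: "'v digraph \<Rightarrow> 'w digraph \<Rightarrow> ('v \<Rightarrow> 'w) set" where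
  "strict_homs G H = {\<xi> \<in> homs G H. \<forall>(v,w) \<in> arcs G. v \<noteq> w \<longrightarrow> \<xi> v \<noteq> \<xi> w}"

definition adjacent :: "'v digraph \<Rightarrow> 'v \<Rightarrow> 'v \<Rightarrow> bool" where
  "adjacent G u w \<longleftrightarrow> (u,w) \<in> arcs G \<or> (w,u) \<in> arcs G"

definition gamma :: "'v digraph \<Rightarrow> 'v set \<Rightarrow> 'v \<Rightarrow> 'v set" where
  "gamma G X v = {w \<in> X. (v, w) \<in> {(a,b). a \<in> X \<and> b \<in> X \<and> adjacent G a b}\<^sup>*}"

definition Gamma :: "'v digraph \<Rightarrow> ('v \<Rightarrow> 'w) \<Rightarrow> 'v \<Rightarrow> 'v set" where
  "Gamma G \<xi> v = gamma G {u \<in> verts G. \<xi> u = \<xi> v} v"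

definition quot :: "'v digraph \<Rightarrow> ('v \<Rightarrow> 'w) \<Rightarrow> 'v set digraph" where
  "quot G \<xi> = (let W = Gamma G \<xi> ` verts G in
     (W, {(a,b). a \<in> W \<and> b \<in> W \<and> (\<exists>x\<in>a. \<exists>y\<in>b. (x,y) \<in> arcs G)}))"

definition gamma_below :: "'v digraph set \<Rightarrow> 'r digraph \<Rightarrow> 's digraph \<Rightarrow> bool" where
  "gamma_below D' R S \<longleftrightarrow>
     (\<exists>\<rho> :: 'v digraph \<Rightarrow> ('v \<Rightarrow> 'r) \<Rightarrow> ('v \<Rightarrow> 's).
        \<forall>G \<in> D'. \<rho> G \<in> homs G R \<rightarrow> homs G S \<and> inj_on (\<rho> G) (homs G R) \<and>
          (\<forall>\<xi> \<in> homs G R. \<forall>v \<in> verts G. Gamma G (\<rho> G \<xi>) v = Gamma G \<xi> v))"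

end

theory Submission
  imports Defs
begin

lemma gamma_sub: "gamma G X v \<subseteq> X" by (auto simp: gamma_def)

lemma gamma_self: "v \<in> X \<Longrightarrow> v \<in> gamma G X v" by (auto simp: gamma_def)

lemma gamma_eq:
  assumes "v \<in> X" "w \<in> gamma G X v"
  shows "gamma G X w = gamma G X v"
proof -
  let ?E = "{(a,b). a \<in> X \<and> b \<in> X \<and> adjacent G a b}"
  have sym: "?E\<inverse> = ?E" by (auto simp: adjacent_def)
  have vw: "(v,w) \<in> ?E\<^sup>*" using assms by (auto simp: gamma_def)
  hence "(w,v) \<in> (?E\<inverse>)\<^sup>*" by (simp add: rtrancl_converse)
  hence wv: "(w,v) \<in> ?E\<^sup>*" using sym by simp
  show ?thesis unfolding gamma_def
    using vw wv by (auto intro: rtrancl_trans)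
qed

lemma gamma_adj:
  assumes "a \<in> X" "b \<in> X" "adjacent G a b"
  shows "gamma G X a = gamma G X b"
proof -
  have "b \<in> gamma G X a" using assms by (auto simp: gamma_def)
  from gamma_eq[OF assms(1) this] show ?thesis by (rule sym)
qed

lemma Gamma_self: "v \<in> verts G \<Longrightarrow> v \<in> Gamma G \<xi> v"
  unfolding Gamma_def by (rule gamma_self) simp

lemma Gamma_mem: "x \<in> Gamma G \<xi> v \<Longrightarrow> x \<in> verts G \<and> \<xi> x = \<xi> v"
  unfolding Gamma_def using gamma_sub by fastforce

lemma Gamma_eq:
  assumes "v \<in> verts G" "x \<in> Gamma G \<xi> v"
  shows "Gamma G \<xi> x = Gamma G \<xi> v"
proof -
  have "\<xi> x = \<xi> v" using Gamma_mem[OF assms(2)] by blast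
  hence X: "{u \<in> verts G. \<xi> u = \<xi> x} = {u \<in> verts G. \<xi> u = \<xi> v}" by simp
  have v: "v \<in> {u \<in> verts G. \<xi> u = \<xi> v}" using assms(1) by simp
  have x: "x \<in> gamma G {u \<in> verts G. \<xi> u = \<xi> v} v" using assms(2) by (simp add: Gamma_def)
  show ?thesis unfolding Gamma_def X using gamma_eq[OF v x] .
qed

lemma Gamma_adj:
  assumes "x \<in> verts G" "y \<in> verts G" "adjacent G x y" "\<xi> x = \<xi> y"
  shows "Gamma G \<xi> x = Gamma G \<xi> y"
  unfolding Gamma_def using assms gamma_adj[of x "{u \<in> verts G. \<xi> u = \<xi> y}" y G]
  by simp

lemma Gamma_transfer:
  assumes v: "v \<in> verts G"
    and c: "\<forall>v\<in>verts G. \<forall>x\<in>Gamma G \<xi> v. \<zeta> x = \<zeta> v"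
    and s: "\<forall>x\<in>verts G. \<forall>y\<in>verts G. adjacent G x y \<longrightarrow> Gamma G \<xi> x \<noteq> Gamma G \<xi> y \<longrightarrow> \<zeta> x \<noteq> \<zeta> y"
  shows "Gamma G \<zeta> v = Gamma G \<xi> v"
proof
  let ?X = "{u \<in> verts G. \<xi> u = \<xi> v}"
  let ?Y = "{u \<in> verts G. \<zeta> u = \<zeta> v}"
  let ?E = "{(a,b). a \<in> ?X \<and> b \<in> ?X \<and> adjacent G a b}"
  let ?F = "{(a,b). a \<in> ?Y \<and> b \<in> ?Y \<and> adjacent G a b}"
  show "Gamma G \<xi> v \<subseteq> Gamma G \<zeta> v"
  proof
    fix w assume w: "w \<in> Gamma G \<xi> v"
    have "(v,w) \<in> ?E\<^sup>*" using w by (simp add: Gamma_def gamma_def)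
    hence "(v,w) \<in> ?F\<^sup>*"
    proof (induction rule: rtrancl_induct)
      case base then show ?case by simp
    next
      case (step y z)
      have yG: "y \<in> Gamma G \<xi> v" using step by (simp add: Gamma_def gamma_def)
      have "(v,z) \<in> ?E\<^sup>*" using step by (meson rtrancl.rtrancl_into_rtrancl)
      hence zG: "z \<in> Gamma G \<xi> v" using step by (simp add: Gamma_def gamma_def)
      have "\<zeta> y = \<zeta> v" "\<zeta> z = \<zeta> v" using c v yG zG by auto
      hence "(y,z) \<in> ?F" using step by auto
      thus ?case using step by (meson rtrancl.rtrancl_into_rtrancl)
    qed
    moreover have "w \<in> ?Y"
    proof -
      have "w \<in> verts G" using Gamma_mem[OF w] by simp
      moreover have "\<zeta> w = \<zeta> v" using c v w by blast
      ultimately show ?thesis by simp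
    qed
    ultimately show "w \<in> Gamma G \<zeta> v" by (simp add: Gamma_def gamma_def)
  qed
  show "Gamma G \<zeta> v \<subseteq> Gamma G \<xi> v"
  proof
    fix w assume w: "w \<in> Gamma G \<zeta> v"
    have "(v,w) \<in> ?F\<^sup>*" using w by (simp add: Gamma_def gamma_def)
    hence "w \<in> verts G \<and> Gamma G \<xi> w = Gamma G \<xi> v"
    proof (induction rule: rtrancl_induct)
      case base then show ?case using v by simp
    next
      case (step y z)
      have yz: "y \<in> verts G" "z \<in> verts G" "adjacent G y z" "\<zeta> y = \<zeta> z" using step(2) by auto
      have "Gamma G \<xi> y = Gamma G \<xi> z" using s yz by blast
      thus ?case using step(3) yz by simp
    qed
    thus "w \<in> Gamma G \<xi> v" using Gamma_self[of w G \<xi>] by simp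
  qed
qed

lemma finite_homs: "digraph G \<Longrightarrow> digraph H \<Longrightarrow> finite (homs G H)"
proof -
  assume "digraph G" "digraph H"
  hence "finite (verts G \<rightarrow>\<^sub>E verts H)" by (simp add: digraph_def finite_PiE)
  thus ?thesis unfolding homs_def by (rule rev_finite_subset) auto
qed

definition AA :: "'v digraph \<Rightarrow> 'r digraph \<Rightarrow> ('v \<Rightarrow> 'v set) \<Rightarrow> ('v \<Rightarrow> 'r) set" where
  "AA G R P = {\<xi> \<in> homs G R. \<forall>v\<in>verts G. Gamma G \<xi> v = P v}"

lemma AA_cong: "\<forall>v\<in>verts G. P v = P' v \<Longrightarrow> AA G R P = AA G R P'"
  unfolding AA_def by auto

lemma card_step:
  assumes G: "digraph G" and R: "digraph R" and S: "digraph S"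
    and x0: "\<xi>0 \<in> homs G R"
    and le: "card (strict_homs (quot G \<xi>0) R) \<le> card (strict_homs (quot G \<xi>0) S)"
  shows "card (AA G R (Gamma G \<xi>0)) \<le> card (AA G S (Gamma G \<xi>0))"
proof -
  let ?V = "verts G"
  let ?P = "Gamma G \<xi>0"
  let ?W = "?P ` ?V"
  let ?Q = "quot G \<xi>0"
  have vQ: "verts ?Q = ?W" by (simp add: quot_def verts_def Let_def)
  have aQ: "arcs ?Q = {(a,b). a \<in> ?W \<and> b \<in> ?W \<and> (\<exists>x\<in>a. \<exists>y\<in>b. (x,y) \<in> arcs G)}"
    by (simp add: quot_def arcs_def Let_def)
  have arcsG: "\<And>x y. (x,y) \<in> arcs G \<Longrightarrow> x \<in> ?V \<and> y \<in> ?V"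
    using G by (auto simp: digraph_def)
  have Pclass: "\<And>v x. v \<in> ?V \<Longrightarrow> x \<in> ?P v \<Longrightarrow> x \<in> ?V \<and> ?P x = ?P v"
    using Gamma_eq Gamma_mem by metis
  define f where "f \<xi> = (\<lambda>a\<in>?W. \<xi> (SOME x. x \<in> a))" for \<xi> :: "'a \<Rightarrow> 'b"
  have fval: "f \<xi> (?P v) = \<xi> v" if "\<xi> \<in> AA G R ?P" "v \<in> ?V" for \<xi> v
  proof -
    have "?P v \<noteq> {}" using Gamma_self that by fast
    hence "(SOME x. x \<in> ?P v) \<in> ?P v" by (simp add: some_in_eq)
    hence h: "(SOME x. x \<in> ?P v) \<in> Gamma G \<xi> v" using that by (simp add: AA_def)
    have "\<xi> (SOME x. x \<in> ?P v) = \<xi> v" using Gamma_mem[OF h] by blast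
    thus ?thesis using that by (simp add: f_def)
  qed
  have f_in: "f ` AA G R ?P \<subseteq> strict_homs ?Q R"
  proof
    fix \<eta> assume "\<eta> \<in> f ` AA G R ?P"
    then obtain \<xi> where xi: "\<xi> \<in> AA G R ?P" and eta: "\<eta> = f \<xi>" by auto
    have hom: "\<xi> \<in> homs G R" using xi by (simp add: AA_def)
    have GP: "\<forall>v\<in>?V. Gamma G \<xi> v = ?P v" using xi by (simp add: AA_def)
    have ext: "\<eta> \<in> verts ?Q \<rightarrow>\<^sub>E verts R"
    proof -
      have "\<eta> a \<in> verts R" if "a \<in> ?W" for a
        using that fval[OF xi] hom by (auto simp: eta homs_def)
      moreover have "\<eta> a = undefined" if "a \<notin> ?W" for a using that by (simp add: eta f_def)
      ultimately show ?thesis using vQ by auto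
    qed
    have arc: "\<And>a b. (a,b) \<in> arcs ?Q \<Longrightarrow> \<exists>x y. (x,y) \<in> arcs G \<and> a = ?P x \<and> b = ?P y"
    proof -
      fix a b assume "(a,b) \<in> arcs ?Q"
      then obtain x y v w where "x \<in> a" "y \<in> b" "(x,y) \<in> arcs G" "v \<in> ?V" "w \<in> ?V"
        "a = ?P v" "b = ?P w" using aQ by auto
      thus "\<exists>x y. (x,y) \<in> arcs G \<and> a = ?P x \<and> b = ?P y" using Pclass by metis
    qed
    have "\<forall>(a,b)\<in>arcs ?Q. (\<eta> a, \<eta> b) \<in> arcs R \<and> (a \<noteq> b \<longrightarrow> \<eta> a \<noteq> \<eta> b)"
    proof (clarify)
      fix a b assume ab: "(a,b) \<in> arcs ?Q"
      then obtain x y where xy: "(x,y) \<in> arcs G" "a = ?P x" "b = ?P y" using arc by blast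
      have xyV: "x \<in> ?V" "y \<in> ?V" using arcsG xy by auto
      have e: "\<eta> a = \<xi> x" "\<eta> b = \<xi> y" using fval[OF xi] xy xyV eta by auto
      have "(\<xi> x, \<xi> y) \<in> arcs R" using hom xy by (auto simp: homs_def)
      moreover have "a \<noteq> b \<longrightarrow> \<xi> x \<noteq> \<xi> y"
      proof
        assume ne: "a \<noteq> b"
        show "\<xi> x \<noteq> \<xi> y"
        proof
          assume "\<xi> x = \<xi> y"
          hence "Gamma G \<xi> x = Gamma G \<xi> y" using Gamma_adj xyV xy by (metis adjacent_def)
          thus False using GP xyV xy ne by simp
        qed
      qed
      ultimately show "(\<eta> a, \<eta> b) \<in> arcs R \<and> (a \<noteq> b \<longrightarrow> \<eta> a \<noteq> \<eta> b)" using e by simp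
    qed
    thus "\<eta> \<in> strict_homs ?Q R" using ext by (auto simp: strict_homs_def homs_def)
  qed
  have f_inj: "inj_on f (AA G R ?P)"
  proof (rule inj_onI)
    fix \<xi>1 \<xi>2 assume a: "\<xi>1 \<in> AA G R ?P" "\<xi>2 \<in> AA G R ?P" "f \<xi>1 = f \<xi>2"
    have e1: "\<xi>1 \<in> ?V \<rightarrow>\<^sub>E verts R" "\<xi>2 \<in> ?V \<rightarrow>\<^sub>E verts R" using a by (auto simp: AA_def homs_def)
    have "\<forall>v\<in>?V. \<xi>1 v = \<xi>2 v" using fval a by metis
    thus "\<xi>1 = \<xi>2" using e1 by (metis PiE_ext)
  qed
  define g where "g \<eta> = (\<lambda>v\<in>?V. \<eta> (?P v))" for \<eta> :: "'a set \<Rightarrow> 'c"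
  have g_in: "g ` strict_homs ?Q S \<subseteq> AA G S ?P"
  proof
    fix \<zeta> assume "\<zeta> \<in> g ` strict_homs ?Q S"
    then obtain \<eta> where eta: "\<eta> \<in> strict_homs ?Q S" and z: "\<zeta> = g \<eta>" by auto
    have eext: "\<eta> \<in> ?W \<rightarrow>\<^sub>E verts S" using eta vQ by (simp add: strict_homs_def homs_def)
    have arcQ: "(?P x, ?P y) \<in> arcs ?Q" if "(x,y) \<in> arcs G" for x y
    proof -
      have V: "x \<in> ?V" "y \<in> ?V" using arcsG that by auto
      have m: "x \<in> ?P x" "y \<in> ?P y" using Gamma_self V by metis+
      have w: "?P x \<in> ?W" "?P y \<in> ?W" using V by auto
      show ?thesis unfolding aQ using m w that by blast
    qed
    have ehom: "\<And>a b. (a,b) \<in> arcs ?Q \<Longrightarrow> (\<eta> a, \<eta> b) \<in> arcs S \<and> (a \<noteq> b \<longrightarrow> \<eta> a \<noteq> \<eta> b)"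
      using eta by (auto simp: strict_homs_def homs_def)
    have zext: "\<zeta> \<in> ?V \<rightarrow>\<^sub>E verts S" using eext by (auto simp: z g_def)
    have zhom: "\<zeta> \<in> homs G S"
      using zext arcQ ehom arcsG by (auto simp: homs_def z g_def)
    have "Gamma G \<zeta> v = ?P v" if "v \<in> ?V" for v
    proof (rule Gamma_transfer[OF that])
      show "\<forall>v\<in>?V. \<forall>x\<in>?P v. \<zeta> x = \<zeta> v"
      proof (intro ballI)
        fix v x assume "v \<in> ?V" "x \<in> ?P v"
        then have "x \<in> ?V" "?P x = ?P v" using Pclass by blast+
        then show "\<zeta> x = \<zeta> v" using \<open>v \<in> ?V\<close> by (simp add: z g_def)
      qed
      show "\<forall>x\<in>?V. \<forall>y\<in>?V. adjacent G x y \<longrightarrow> ?P x \<noteq> ?P y \<longrightarrow> \<zeta> x \<noteq> \<zeta> y"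
      proof (intro ballI impI)
        fix x y assume xy: "x \<in> ?V" "y \<in> ?V" "adjacent G x y" "?P x \<noteq> ?P y"
        have "(?P x, ?P y) \<in> arcs ?Q \<or> (?P y, ?P x) \<in> arcs ?Q" using xy(3) arcQ unfolding adjacent_def by blast
        hence "\<eta> (?P x) \<noteq> \<eta> (?P y)" using ehom xy(4) by metis
        thus "\<zeta> x \<noteq> \<zeta> y" using xy by (simp add: z g_def)
      qed
    qed
    thus "\<zeta> \<in> AA G S ?P" using zhom by (simp add: AA_def)
  qed
  have g_inj: "inj_on g (strict_homs ?Q S)"
  proof (rule inj_onI)
    fix \<eta>1 \<eta>2 assume a: "\<eta>1 \<in> strict_homs ?Q S" "\<eta>2 \<in> strict_homs ?Q S" "g \<eta>1 = g \<eta>2"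
    have e: "\<eta>1 \<in> ?W \<rightarrow>\<^sub>E verts S" "\<eta>2 \<in> ?W \<rightarrow>\<^sub>E verts S" using a vQ by (auto simp: strict_homs_def homs_def)
    have "\<forall>a\<in>?W. \<eta>1 a = \<eta>2 a"
    proof
      fix a assume "a \<in> ?W"
      then obtain v where "v \<in> ?V" "a = ?P v" by auto
      thus "\<eta>1 a = \<eta>2 a" using a(3) unfolding g_def by (metis restrict_apply')
    qed
    thus "\<eta>1 = \<eta>2" using e by (metis PiE_ext)
  qed
  have Qd: "finite ?W" using G by (simp add: digraph_def)
  have fin1: "finite (strict_homs ?Q R)"
  proof -
    have "finite (?W \<rightarrow>\<^sub>E verts R)" using Qd R by (simp add: digraph_def finite_PiE)
    thus ?thesis by (rule rev_finite_subset) (auto simp: strict_homs_def homs_def vQ)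
  qed
  have fin2: "finite (AA G S ?P)" using finite_homs[OF G S] unfolding AA_def by (rule rev_finite_subset) auto
  have "card (AA G R ?P) \<le> card (strict_homs ?Q R)" using card_inj_on_le[OF f_inj f_in fin1] .
  also have "\<dots> \<le> card (strict_homs ?Q S)" using le .
  also have "\<dots> \<le> card (AA G S ?P)" using card_inj_on_le[OF g_inj g_in fin2] .
  finally show ?thesis .
qed

theorem lemma4:
  fixes R :: "'r digraph" and S :: "'s digraph" and D' :: "'v digraph set"
  assumes "digraph R" and "digraph S"
    and "\<forall>G \<in> D'. digraph G"
    and "\<forall>Q \<in> {quot G \<xi> | G \<xi>. G \<in> D' \<and> \<xi> \<in> homs G R}.
           card (strict_homs Q R) \<le> card (strict_homs Q S)"
  shows "gamma_below D' R S"
proof -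
  define F where "F G \<xi> = (SOME f. f ` AA G R (Gamma G \<xi>) \<subseteq> AA G S (Gamma G \<xi>) \<and> inj_on f (AA G R (Gamma G \<xi>)))"
    for G :: "'v digraph" and \<xi> :: "'v \<Rightarrow> 'r"
  define \<rho> where "\<rho> G \<xi> = F G \<xi> \<xi>" for G \<xi>
  have Fprop: "F G \<xi> ` AA G R (Gamma G \<xi>) \<subseteq> AA G S (Gamma G \<xi>) \<and> inj_on (F G \<xi>) (AA G R (Gamma G \<xi>))"
    if G: "G \<in> D'" and x: "\<xi> \<in> homs G R" for G \<xi>
  proof -
    have dG: "digraph G" using assms G by auto
    have "card (AA G R (Gamma G \<xi>)) \<le> card (AA G S (Gamma G \<xi>))"
    proof -
      have "quot G \<xi> \<in> {quot G \<xi> | G \<xi>. G \<in> D' \<and> \<xi> \<in> homs G R}" using G x by blast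
      hence "card (strict_homs (quot G \<xi>) R) \<le> card (strict_homs (quot G \<xi>) S)" using assms(4) by blast
      thus ?thesis using card_step[OF dG assms(1,2) x] by blast
    qed
    moreover have "finite (AA G R (Gamma G \<xi>))" "finite (AA G S (Gamma G \<xi>))"
      using finite_homs[OF dG assms(1)] finite_homs[OF dG assms(2)] unfolding AA_def by auto
    ultimately have "\<exists>f. f ` AA G R (Gamma G \<xi>) \<subseteq> AA G S (Gamma G \<xi>) \<and> inj_on f (AA G R (Gamma G \<xi>))"
      using card_le_inj by blast
    thus ?thesis unfolding F_def by (rule someI_ex)
  qed
  have selfA: "\<xi> \<in> AA G R (Gamma G \<xi>)" if "\<xi> \<in> homs G R" for G \<xi> using that by (simp add: AA_def)
  show ?thesis unfolding gamma_below_def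
  proof (rule exI[of _ \<rho>], rule ballI, intro conjI)
    fix G assume G: "G \<in> D'"
    have rin: "\<rho> G \<xi> \<in> AA G S (Gamma G \<xi>)" if "\<xi> \<in> homs G R" for \<xi>
      using Fprop[OF G that] selfA[OF that] by (auto simp: \<rho>_def)
    show "\<rho> G \<in> homs G R \<rightarrow> homs G S" using rin by (auto simp: AA_def)
    show "\<forall>\<xi>\<in>homs G R. \<forall>v\<in>verts G. Gamma G (\<rho> G \<xi>) v = Gamma G \<xi> v"
      using rin by (auto simp: AA_def)
    show "inj_on (\<rho> G) (homs G R)"
    proof (rule inj_onI)
      fix \<xi>1 \<xi>2 assume x: "\<xi>1 \<in> homs G R" "\<xi>2 \<in> homs G R" and eq: "\<rho> G \<xi>1 = \<rho> G \<xi>2"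
      have "\<forall>v\<in>verts G. Gamma G \<xi>1 v = Gamma G \<xi>2 v"
        using rin[OF x(1)] rin[OF x(2)] eq by (auto simp: AA_def)
      hence AE: "AA G R (Gamma G \<xi>1) = AA G R (Gamma G \<xi>2)" and
        AS: "AA G S (Gamma G \<xi>1) = AA G S (Gamma G \<xi>2)"
        by (rule AA_cong)+
      have FE: "F G \<xi>1 = F G \<xi>2" unfolding F_def AE AS ..
      have "\<xi>2 \<in> AA G R (Gamma G \<xi>1)" using AE selfA[OF x(2)] by simp
      moreover have "F G \<xi>1 \<xi>1 = F G \<xi>1 \<xi>2" using eq FE by (simp add: \<rho>_def)
      ultimately show "\<xi>1 = \<xi>2" using Fprop[OF G x(1)] selfA[OF x(1)] by (meson inj_onD)
    qed
  qed
qed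

end
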